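(* Let $N\ge3$ and $p>p_{\rm S}$. The problem $$y''+\alpha y'-y+y^p+B_0(t)y^p+B_1(t)y=0,\qquad y(t)\to1\ \text{as }t\to-\infty,$$ has a solution defined on $(-\infty,T]$ for some $T\in\mathbb{R}$, and this solution is unique near $t=-\infty$ (any two such solutions coincide on some interval $(-\infty,T']$).
   Context: $p_{\rm S}=\frac{N+2}{N-2}$, $\mu=\frac{2}{p-1}$, $a=\{\mu(N-2-\mu)\}^{\mu/2}$, $m=a^{-(p-1)/2}$, $\alpha=m(N-2-2\mu)$, $q=\frac{N-2}{2}(p-p_{\rm S})$, $B_0(t)=(1+e^{2mt})^q-1$, $B_1(t)=\frac{N(N-2)e^{2mt}}{(1+e^{2mt})^2}$. *)

theory Defs
  imports "HOL-Analysis.Analysis"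
begin

definition pS :: "nat \<Rightarrow> real" where
  "pS N = (real N + 2) / (real N - 2)"

definition mu :: "real \<Rightarrow> real" where
  "mu p = 2 / (p - 1)"

definition aconst :: "nat \<Rightarrow> real \<Rightarrow> real" where
  "aconst N p = (mu p * (real N - 2 - mu p)) powr (mu p / 2)"

definition mconst :: "nat \<Rightarrow> real \<Rightarrow> real" where
  "mconst N p = aconst N p powr (- (p - 1) / 2)"

definition alpha :: "nat \<Rightarrow> real \<Rightarrow> real" where
  "alpha N p = mconst N p * (real N - 2 - 2 * mu p)"

definition qconst :: "nat \<Rightarrow> real \<Rightarrow> real" where
  "qconst N p = (real N - 2) / 2 * (p - pS N)"

definition B0 :: "nat \<Rightarrow> real \<Rightarrow> real \<Rightarrow> real" where
  "B0 N p t = (1 + exp (2 * mconst N p * t)) powr (qconst N p) - 1"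

definition B1 :: "nat \<Rightarrow> real \<Rightarrow> real \<Rightarrow> real" where
  "B1 N p t = real N * (real N - 2) * exp (2 * mconst N p * t)
              / (1 + exp (2 * mconst N p * t))\<^sup>2"

definition is_sol :: "nat \<Rightarrow> real \<Rightarrow> real \<Rightarrow> (real \<Rightarrow> real) \<Rightarrow> (real \<Rightarrow> real) \<Rightarrow> bool" where
  "is_sol N p T y y' \<longleftrightarrow>
     (\<forall>t\<le>T. (y has_real_derivative y' t) (at t within {..T}) \<and>
        (y' has_real_derivative
            (- alpha N p * y' t + y t - y t powr p - B0 N p t * y t powr p - B1 N p t * y t))
          (at t within {..T})) \<and>
     (y \<longlongrightarrow> 1) at_bot"

end

theory Submission
  imports Defs "HOL-Real_Asymp.Real_Asymp"
begin

lemma consts_pos: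
  fixes N :: nat and p :: real
  assumes N: "N \<ge> 3" and p: "p > pS N"
  shows "p > 1" "mu p > 0" "real N - 2 - 2 * mu p > 0" "mconst N p > 0"
    "alpha N p > 0" "qconst N p > 0"
proof -
  have N2: "real N - 2 \<ge> 1" using N by simp
  have pS1: "pS N > 1" unfolding pS_def using N2 by (simp add: field_simps)
  show p1: "p > 1" using p pS1 by simp
  show mu0: "mu p > 0" unfolding mu_def using p1 by simp
  have "p - 1 > 4 / (real N - 2)"
    using p N2 unfolding pS_def by (simp add: field_simps)
  hence "(p - 1) * (real N - 2) > 4" using N2 by (simp add: field_simps)
  hence "2 * mu p < real N - 2" unfolding mu_def using p1 by (simp add: field_simps)
  thus m2: "real N - 2 - 2 * mu p > 0" by simp
  have "mu p * (real N - 2 - mu p) > 0" using mu0 m2 by simp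
  hence "aconst N p > 0" unfolding aconst_def using mu0 m2 by auto
  thus m0: "mconst N p > 0" unfolding mconst_def by simp
  show "alpha N p > 0" unfolding alpha_def using m0 m2 by simp
  show "qconst N p > 0" unfolding qconst_def using p N2 by simp
qed

lemma B0_lim:
  assumes "m > 0"
  shows "((\<lambda>t::real. (1 + exp (2 * m * t)) powr q - 1) \<longlongrightarrow> 0) at_bot"
  using assms by real_asymp

lemma B1_lim:
  assumes "m > 0"
  shows "((\<lambda>t::real. c * exp (2 * m * t) / (1 + exp (2 * m * t))\<^sup>2) \<longlongrightarrow> 0) at_bot"
  using assms by real_asymp

lemma powr_near1:
  fixes p e :: real
  assumes "e > 0"
  shows "\<exists>d>0. \<forall>x. \<bar>x - 1\<bar> < d \<longrightarrow> \<bar>x powr p - 1\<bar> < e"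
proof -
  have "isCont (\<lambda>x. x powr p) 1" by (intro continuous_intros) auto
  hence "(\<lambda>x. x powr p) \<midarrow>1\<rightarrow> 1" unfolding isCont_def by simp
  then obtain s where s: "s > 0" "\<And>x. x \<noteq> 1 \<Longrightarrow> norm (x - 1) < s \<Longrightarrow> norm (x powr p - 1) < e"
    using assms unfolding LIM_eq by blast
  show ?thesis
  proof (intro exI[of _ s] conjI allI impI)
    fix x :: real assume "\<bar>x - 1\<bar> < s"
    thus "\<bar>x powr p - 1\<bar> < e" using s assms by (cases "x = 1") auto
  qed (use s in auto)
qed

lemma powr_lip_lt:
  fixes p e d a b :: real
  assumes p: "p > 1" and d: "d \<le> 1/2"
    and dd: "\<And>x. \<bar>x - 1\<bar> \<le> d \<Longrightarrow> \<bar>x powr (p-1) - 1\<bar> \<le> e / p"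
    and a: "\<bar>a - 1\<bar> \<le> d" and b: "\<bar>b - 1\<bar> \<le> d" and ab: "a < b"
  shows "\<bar>b powr p - a powr p - p * (b - a)\<bar> \<le> e * \<bar>b - a\<bar>"
proof -
  have "DERIV (\<lambda>x. x powr p - p * x) x :> (p * x powr (p - 1) - p)" if "a \<le> x" "x \<le> b" for x
  proof -
    from that have "x > 0" using a d by auto
    thus "DERIV (\<lambda>x. x powr p - p * x) x :> (p * x powr (p - 1) - p)"
      by (auto intro!: derivative_eq_intros)
  qed
  from MVT2[OF ab this] obtain z where z: "a < z" "z < b"
    "(b powr p - p * b) - (a powr p - p * a) = (b - a) * (p * z powr (p - 1) - p)" by blast
  have "\<bar>z - 1\<bar> \<le> d" using z a b by auto
  hence zz: "\<bar>z powr (p-1) - 1\<bar> \<le> e / p" by (rule dd)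
  have "\<bar>b powr p - a powr p - p * (b - a)\<bar> = \<bar>b - a\<bar> * (p * \<bar>z powr (p - 1) - 1\<bar>)"
  proof -
    have "b powr p - a powr p - p * (b - a) = (b - a) * (p * (z powr (p - 1) - 1))"
      using z(3) by (simp add: algebra_simps)
    thus ?thesis using p by (simp add: abs_mult)
  qed
  also have "\<dots> \<le> \<bar>b - a\<bar> * (p * (e / p))"
    using zz p by (intro mult_left_mono) auto
  also have "\<dots> = e * \<bar>b - a\<bar>" using p by simp
  finally show ?thesis .
qed

lemma powr_lip:
  fixes p e :: real
  assumes p: "p > 1" and e: "e > 0"
  shows "\<exists>d>0. d \<le> 1/2 \<and> (\<forall>a b. \<bar>a - 1\<bar> \<le> d \<longrightarrow> \<bar>b - 1\<bar> \<le> d \<longrightarrow>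
            \<bar>a powr p - b powr p - p * (a - b)\<bar> \<le> e * \<bar>a - b\<bar>)"
proof -
  obtain s where s: "s > 0" "\<And>x. \<bar>x - 1\<bar> < s \<Longrightarrow> \<bar>x powr (p-1) - 1\<bar> < e / p"
    using powr_near1[of "e/p" "p-1"] e p by auto
  define d where "d = min (s/2) (1/2)"
  have d: "d > 0" "d \<le> 1/2" using s unfolding d_def by auto
  have dd: "\<bar>x powr (p-1) - 1\<bar> \<le> e / p" if "\<bar>x - 1\<bar> \<le> d" for x
    using s(2)[of x] that s(1) unfolding d_def by auto
  show ?thesis
  proof (intro exI[of _ d] conjI allI impI d)
    fix a b :: real assume a: "\<bar>a - 1\<bar> \<le> d" and b: "\<bar>b - 1\<bar> \<le> d"
    consider "a < b" | "a = b" | "b < a" by linarith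
    thus "\<bar>a powr p - b powr p - p * (a - b)\<bar> \<le> e * \<bar>a - b\<bar>"
    proof cases
      case 1
      from powr_lip_lt[OF p d(2) dd a b 1] show ?thesis
        by (simp add: abs_minus_commute algebra_simps)
    next
      case 3
      from powr_lip_lt[OF p d(2) dd b a 3] show ?thesis by simp
    qed simp
  qed
qed

lemma ev_bot: fixes f :: "real \<Rightarrow> real" shows "(f \<longlongrightarrow> (0::real)) at_bot \<Longrightarrow> c > 0 \<Longrightarrow> \<exists>T. \<forall>t\<le>T. \<bar>f t\<bar> \<le> c"
proof -
  assume "(f \<longlongrightarrow> (0::real)) at_bot" "c > 0"
  hence "eventually (\<lambda>t. dist (f t) 0 < c) at_bot" by (simp add: tendsto_iff)
  hence "\<exists>T. \<forall>t\<le>T. dist (f t) 0 < c" by (simp only: eventually_at_bot_linorder)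
  then obtain T where "\<And>t. t \<le> T \<Longrightarrow> dist (f t) 0 < c" by auto
  thus ?thesis by (auto simp: dist_real_def intro!: less_imp_le)
qed

lemma key_lip:
  fixes p e :: real and b0 b1 :: "real \<Rightarrow> real"
  assumes p: "p > 1" and e: "e > 0" and l0: "(b0 \<longlongrightarrow> 0) at_bot" and l1: "(b1 \<longlongrightarrow> 0) at_bot"
  shows "\<exists>d>0. d \<le> 1/2 \<and> (\<exists>T0. \<forall>t\<le>T0. \<forall>a b. \<bar>a - 1\<bar> \<le> d \<longrightarrow> \<bar>b - 1\<bar> \<le> d \<longrightarrow>
     \<bar>p * (a - b) - (1 + b0 t) * (a powr p - b powr p) - b1 t * (a - b)\<bar> \<le> e * \<bar>a - b\<bar>)"
proof -
  define e1 where "e1 = e / 3"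
  have e1: "e1 > 0" using e unfolding e1_def by simp
  obtain d where d: "d > 0" "d \<le> 1/2" and dl: "\<And>a b. \<bar>a - 1\<bar> \<le> d \<Longrightarrow> \<bar>b - 1\<bar> \<le> d \<Longrightarrow>
            \<bar>a powr p - b powr p - p * (a - b)\<bar> \<le> e1 * \<bar>a - b\<bar>"
    using powr_lip[OF p e1] by blast
  obtain T1 where T1: "\<And>t. t \<le> T1 \<Longrightarrow> \<bar>b0 t\<bar> \<le> e1 / (p + e1)"
    using ev_bot[OF l0, of "e1 / (p + e1)"] e1 p by auto
  obtain T2 where T2: "\<And>t. t \<le> T2 \<Longrightarrow> \<bar>b1 t\<bar> \<le> e1"
    using ev_bot[OF l1, of e1] e1 by auto
  show ?thesis
  proof (rule exI[of _ d], intro conjI d, rule exI[of _ "min T1 T2"], intro allI impI)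
    fix t a b :: real assume t: "t \<le> min T1 T2" and a: "\<bar>a - 1\<bar> \<le> d" and b: "\<bar>b - 1\<bar> \<le> d"
    define D where "D = a powr p - b powr p"
    have h1: "\<bar>D - p * (a - b)\<bar> \<le> e1 * \<bar>a - b\<bar>" using dl[OF a b] unfolding D_def .
    have h2: "\<bar>D\<bar> \<le> (p + e1) * \<bar>a - b\<bar>"
    proof -
      have "\<bar>D\<bar> \<le> \<bar>D - p * (a - b)\<bar> + \<bar>p * (a - b)\<bar>" by linarith
      also have "\<dots> \<le> e1 * \<bar>a - b\<bar> + p * \<bar>a - b\<bar>" using h1 p by (simp add: abs_mult)
      finally show ?thesis by (simp add: algebra_simps)
    qed
    have h3: "\<bar>b0 t * D\<bar> \<le> e1 * \<bar>a - b\<bar>"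
    proof -
      have "\<bar>b0 t * D\<bar> = \<bar>b0 t\<bar> * \<bar>D\<bar>" by (simp add: abs_mult)
      also have "\<dots> \<le> (e1 / (p + e1)) * ((p + e1) * \<bar>a - b\<bar>)"
        using T1[of t] t h2 by (intro mult_mono) auto
      also have "\<dots> = e1 * \<bar>a - b\<bar>" using p e1 by simp
      finally show ?thesis .
    qed
    have h4: "\<bar>b1 t * (a - b)\<bar> \<le> e1 * \<bar>a - b\<bar>"
      using T2[of t] t by (simp add: abs_mult mult_right_mono)
    have "p * (a - b) - (1 + b0 t) * D - b1 t * (a - b) = - (D - p * (a - b)) - b0 t * D - b1 t * (a - b)"
      by (simp add: algebra_simps)
    hence "\<bar>p * (a - b) - (1 + b0 t) * D - b1 t * (a - b)\<bar> \<le> 3 * e1 * \<bar>a - b\<bar>"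
      using h1 h3 h4 by linarith
    thus "\<bar>p * (a - b) - (1 + b0 t) * (a powr p - b powr p) - b1 t * (a - b)\<bar> \<le> e * \<bar>a - b\<bar>"
      unfolding D_def e1_def by simp
  qed
qed

lemma lim_B:
  assumes "N \<ge> 3" "p > pS N"
  shows "(B0 N p \<longlongrightarrow> 0) at_bot" "(B1 N p \<longlongrightarrow> 0) at_bot"
proof -
  have m: "mconst N p > 0" using consts_pos[OF assms] by simp
  show "(B0 N p \<longlongrightarrow> 0) at_bot"
    using B0_lim[OF m, of "qconst N p"] unfolding B0_def[abs_def] .
  show "(B1 N p \<longlongrightarrow> 0) at_bot"
    using B1_lim[OF m, of "real N * (real N - 2)"] unfolding B1_def[abs_def] .
qed

lemma deriv_within_to_at:
  assumes "(f has_real_derivative D) (at t within {..T})" "t < T"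
  shows "(f has_real_derivative D) (at t)"
proof -
  have "(f has_real_derivative D) (at t within {..<T})"
    using assms(1) by (rule has_field_derivative_subset) auto
  moreover have "at t within {..<T} = at t" using assms(2) by (intro at_within_open) auto
  ultimately show ?thesis by simp
qed

lemma is_solD:
  assumes "is_sol N p T y y'" "t < T"
  shows "(y has_real_derivative y' t) (at t)"
    "(y' has_real_derivative
            (- alpha N p * y' t + y t - y t powr p - B0 N p t * y t powr p - B1 N p t * y t)) (at t)"
proof -
  have "t \<le> T" using assms(2) by simp
  hence A: "(y has_real_derivative y' t) (at t within {..T}) \<and> (y' has_real_derivative
            (- alpha N p * y' t + y t - y t powr p - B0 N p t * y t powr p - B1 N p t * y t)) (at t within {..T})"
    using assms(1) unfolding is_sol_def by blast
  show "(y has_real_derivative y' t) (at t)" using deriv_within_to_at[OF conjunct1[OF A] assms(2)] .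
  show "(y' has_real_derivative
            (- alpha N p * y' t + y t - y t powr p - B0 N p t * y t powr p - B1 N p t * y t)) (at t)"
    using deriv_within_to_at[OF conjunct2[OF A] assms(2)] .
qed

lemma lim_near1:
  fixes y :: "real \<Rightarrow> real"
  assumes "(y \<longlongrightarrow> 1) at_bot" "c > 0"
  shows "\<exists>R. \<forall>t\<le>R. \<bar>y t - 1\<bar> \<le> c"
proof -
  have "((\<lambda>t. y t - 1) \<longlongrightarrow> 0) at_bot" using tendsto_diff[OF assms(1) tendsto_const, of 1] by simp
  from ev_bot[OF this assms(2)] show ?thesis .
qed

lemma sol_deriv_bounded:
  assumes N: "N \<ge> 3" and p: "p > pS N" and sol: "is_sol N p T y y'"
  shows "\<exists>t1 M. t1 < T \<and> (\<forall>t\<le>t1. \<bar>y' t\<bar> \<le> M)"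
proof -
  define \<alpha> where "\<alpha> = alpha N p"
  have a0: "\<alpha> > 0" using consts_pos[OF N p] unfolding \<alpha>_def by simp
  have p1: "p > 1" using consts_pos[OF N p] by simp
  have lim: "(y \<longlongrightarrow> 1) at_bot" using sol unfolding is_sol_def by simp
  obtain R where R: "\<And>t. t \<le> R \<Longrightarrow> \<bar>y t - 1\<bar> \<le> 1/2" using lim_near1[OF lim, of "1/2"] by auto
  obtain R0 where R0: "\<And>t. t \<le> R0 \<Longrightarrow> \<bar>B0 N p t\<bar> \<le> 1" using ev_bot[OF lim_B(1)[OF N p], of 1] by auto
  obtain R1 where R1: "\<And>t. t \<le> R1 \<Longrightarrow> \<bar>B1 N p t\<bar> \<le> 1" using ev_bot[OF lim_B(2)[OF N p], of 1] by auto
  define t1 where "t1 = min (min R R0) (min R1 (T - 1))"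
  define Yp where "Yp = (3/2::real) powr p"
  define H where "H = 3 + 2 * Yp"
  define h where "h = (\<lambda>t. y t - y t powr p - B0 N p t * y t powr p - B1 N p t * y t)"
  have t1T: "t1 < T" unfolding t1_def by simp
  have hb: "\<bar>h t\<bar> \<le> H" if "t \<le> t1" for t
  proof -
    have "\<bar>y t - 1\<bar> \<le> 1/2" using R[of t] that unfolding t1_def by auto
    hence yt: "y t > 0" "y t \<le> 3/2" unfolding abs_le_iff by linarith+
    have yp: "0 \<le> y t powr p" "y t powr p \<le> Yp" unfolding Yp_def using yt p1 by (auto intro: powr_mono2)
    have b0: "\<bar>B0 N p t\<bar> \<le> 1" and b1: "\<bar>B1 N p t\<bar> \<le> 1" using R0[of t] R1[of t] that unfolding t1_def by auto
    have "\<bar>B0 N p t * y t powr p\<bar> \<le> 1 * Yp" unfolding abs_mult using b0 yp by (intro mult_mono) auto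
    moreover have "\<bar>B1 N p t * y t\<bar> \<le> 1 * (3/2)" unfolding abs_mult using b1 yt by (intro mult_mono) auto
    ultimately show ?thesis unfolding h_def H_def using yt yp by (simp only: abs_le_iff) linarith
  qed
  have dy: "(y has_real_derivative y' t) (at t)" if "t \<le> t1" for t
    using is_solD(1)[OF sol] that t1T by simp
  have dy': "(y' has_real_derivative (- \<alpha> * y' t + h t)) (at t)" if "t \<le> t1" for t
    using is_solD(2)[OF sol, of t] that t1T unfolding h_def \<alpha>_def by (simp add: algebra_simps)
  have up: "y' s \<le> H / \<alpha>" if s: "s \<le> t1" for s
  proof (rule ccontr)
    assume "\<not> y' s \<le> H / \<alpha>"
    define c where "c = H / \<alpha>"
    define d where "d = y' s - c"
    have d: "d > 0" using \<open>\<not> y' s \<le> H / \<alpha>\<close> unfolding d_def c_def by simp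
    have ac: "\<alpha> * c = H" unfolding c_def using a0 by simp
    have c0: "c \<ge> 0" unfolding c_def H_def Yp_def using a0 by auto
    have y'r: "y' r - c \<ge> d" if r: "r \<le> s" for r
    proof -
      have "(\<lambda>x. exp (\<alpha> * x) * (y' x - c)) s \<le> (\<lambda>x. exp (\<alpha> * x) * (y' x - c)) r"
      proof (rule DERIV_nonpos_imp_nonincreasing[OF r])
        fix x assume x: "r \<le> x" "x \<le> s"
        hence xt: "x \<le> t1" using s by simp
        have "((\<lambda>x. exp (\<alpha> * x) * (y' x - c)) has_real_derivative
              (\<alpha> * exp (\<alpha> * x) * (y' x - c) + exp (\<alpha> * x) * (- \<alpha> * y' x + h x))) (at x)"
          by (auto intro!: derivative_eq_intros dy'[OF xt])
        moreover have "\<alpha> * exp (\<alpha> * x) * (y' x - c) + exp (\<alpha> * x) * (- \<alpha> * y' x + h x)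
            = exp (\<alpha> * x) * (h x - H)" using ac by (simp add: algebra_simps)
        moreover have "exp (\<alpha> * x) * (h x - H) \<le> 0"
          using hb[OF xt] by (intro mult_nonneg_nonpos) auto
        ultimately show "\<exists>D. ((\<lambda>x. exp (\<alpha> * x) * (y' x - c)) has_real_derivative D) (at x) \<and> D \<le> 0"
          by auto
      qed
      hence le: "exp (\<alpha> * s) * d \<le> exp (\<alpha> * r) * (y' r - c)" unfolding d_def by simp
      have er: "exp (\<alpha> * r) \<le> exp (\<alpha> * s)" using r a0 by simp
      show ?thesis
      proof (rule ccontr)
        assume "\<not> d \<le> y' r - c"
        hence "exp (\<alpha> * r) * (y' r - c) < exp (\<alpha> * s) * d"
        proof (cases "y' r - c \<le> 0")
          case True thus ?thesis using d by (smt (verit) exp_gt_zero mult_nonneg_nonpos mult_pos_pos)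
        next
          case False
          hence "exp (\<alpha> * r) * (y' r - c) \<le> exp (\<alpha> * s) * (y' r - c)" using er by (intro mult_right_mono) auto
          also have "\<dots> < exp (\<alpha> * s) * d" using \<open>\<not> d \<le> y' r - c\<close> by simp
          finally show ?thesis .
        qed
        thus False using le by simp
      qed
    qed
    define r where "r = s - 2 / d"
    have rs: "r \<le> s" unfolding r_def using d by simp
    have "(\<lambda>x. y x - d * x) r \<le> (\<lambda>x. y x - d * x) s"
    proof (rule DERIV_nonneg_imp_nondecreasing[OF rs])
      fix x assume x: "r \<le> x" "x \<le> s"
      hence xt: "x \<le> t1" using s by simp
      have "((\<lambda>x. y x - d * x) has_real_derivative (y' x - d)) (at x)"
        by (auto intro!: derivative_eq_intros dy[OF xt])
      moreover have "y' x - d \<ge> 0" using y'r[of x] x c0 by simp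
      ultimately show "\<exists>D. ((\<lambda>x. y x - d * x) has_real_derivative D) (at x) \<and> D \<ge> 0" by auto
    qed
    hence "y r \<le> y s - d * (s - r)" by (simp add: algebra_simps)
    also have "d * (s - r) = 2" unfolding r_def using d by simp
    finally have "y r \<le> y s - 2" .
    moreover have "\<bar>y r - 1\<bar> \<le> 1/2" "\<bar>y s - 1\<bar> \<le> 1/2" using R[of r] R[of s] rs s unfolding t1_def by auto
    ultimately show False by simp
  qed
  have lo: "y' s \<ge> - (H / \<alpha>)" if s: "s \<le> t1" for s
  proof (rule ccontr)
    assume "\<not> y' s \<ge> - (H / \<alpha>)"
    define c where "c = H / \<alpha>"
    define d where "d = - (y' s + c)"
    have d: "d > 0" using \<open>\<not> y' s \<ge> - (H / \<alpha>)\<close> unfolding d_def c_def by simp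
    have ac: "\<alpha> * c = H" unfolding c_def using a0 by simp
    have c0: "c \<ge> 0" unfolding c_def H_def Yp_def using a0 by auto
    have y'r: "y' r + c \<le> - d" if r: "r \<le> s" for r
    proof -
      have "(\<lambda>x. exp (\<alpha> * x) * (y' x + c)) r \<le> (\<lambda>x. exp (\<alpha> * x) * (y' x + c)) s"
      proof (rule DERIV_nonneg_imp_nondecreasing[OF r])
        fix x assume x: "r \<le> x" "x \<le> s"
        hence xt: "x \<le> t1" using s by simp
        have "((\<lambda>x. exp (\<alpha> * x) * (y' x + c)) has_real_derivative
              (\<alpha> * exp (\<alpha> * x) * (y' x + c) + exp (\<alpha> * x) * (- \<alpha> * y' x + h x))) (at x)"
          by (auto intro!: derivative_eq_intros dy'[OF xt])
        moreover have "\<alpha> * exp (\<alpha> * x) * (y' x + c) + exp (\<alpha> * x) * (- \<alpha> * y' x + h x)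
            = exp (\<alpha> * x) * (h x + H)" using ac by (simp add: algebra_simps)
        moreover have "exp (\<alpha> * x) * (h x + H) \<ge> 0"
          using hb[OF xt] by (intro mult_nonneg_nonneg) auto
        ultimately show "\<exists>D. ((\<lambda>x. exp (\<alpha> * x) * (y' x + c)) has_real_derivative D) (at x) \<and> D \<ge> 0"
          by auto
      qed
      moreover have "exp (\<alpha> * s) * (- d) = exp (\<alpha> * s) * (y' s + c)" unfolding d_def by (rule arg_cong[where f="\<lambda>u. exp (\<alpha> * s) * u"]) simp
      ultimately have le: "exp (\<alpha> * r) * (y' r + c) \<le> exp (\<alpha> * s) * (- d)" by linarith
      have er: "exp (\<alpha> * r) \<le> exp (\<alpha> * s)" using r a0 by simp
      show ?thesis
      proof (rule ccontr)
        assume "\<not> y' r + c \<le> - d"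
        hence "exp (\<alpha> * r) * (y' r + c) > exp (\<alpha> * s) * (- d)"
        proof (cases "y' r + c \<ge> 0")
          case True
          hence "0 \<le> exp (\<alpha> * r) * (y' r + c)" by simp
          moreover have "exp (\<alpha> * s) * (- d) < 0" using d by (simp add: mult_pos_neg)
          ultimately show ?thesis by linarith
        next
          case False
          hence "exp (\<alpha> * r) * (y' r + c) \<ge> exp (\<alpha> * s) * (y' r + c)" using er by (intro mult_right_mono_neg) auto
          moreover have "exp (\<alpha> * s) * (y' r + c) > exp (\<alpha> * s) * (- d)" using \<open>\<not> y' r + c \<le> - d\<close>
            by (intro mult_strict_left_mono) auto
          ultimately show ?thesis by linarith
        qed
        thus False using le by simp
      qed
    qed
    define r where "r = s - 2 / d"
    have rs: "r \<le> s" unfolding r_def using d by simp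
    have "(\<lambda>x. y x + d * x) s \<le> (\<lambda>x. y x + d * x) r"
    proof (rule DERIV_nonpos_imp_nonincreasing[OF rs])
      fix x assume x: "r \<le> x" "x \<le> s"
      hence xt: "x \<le> t1" using s by simp
      have "((\<lambda>x. y x + d * x) has_real_derivative (y' x + d)) (at x)"
        by (auto intro!: derivative_eq_intros dy[OF xt])
      moreover have "y' x + d \<le> 0" using y'r[of x] x c0 by simp
      ultimately show "\<exists>D. ((\<lambda>x. y x + d * x) has_real_derivative D) (at x) \<and> D \<le> 0" by auto
    qed
    hence "y r \<ge> y s + d * (s - r)" by (simp add: algebra_simps)
    moreover have "d * (s - r) = 2" unfolding r_def using d by simp
    moreover have "\<bar>y r - 1\<bar> \<le> 1/2" "\<bar>y s - 1\<bar> \<le> 1/2" using R[of r] R[of s] rs s unfolding t1_def by auto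
    ultimately show False by simp
  qed
  show ?thesis
  proof (rule exI[of _ t1], rule exI[of _ "H / \<alpha>"], intro conjI allI impI t1T)
    fix t assume t: "t \<le> t1"
    show "\<bar>y' t\<bar> \<le> H / \<alpha>" using up[OF t] lo[OF t] by (intro abs_leI) linarith+
  qed
qed

lemma lyap_ineq:
  fixes a k e w v r :: real
  assumes a: "a > 0" and k: "k > 0" and e0: "e \<ge> 0" and e1: "e \<le> a / 2" and e2: "e * (1 + a) \<le> a * k / 2"
    and r: "\<bar>r\<bar> \<le> e * \<bar>w\<bar>"
  shows "(min (a/2) (a*k/2) / (1 + a + a^2/2 + k)) * (v^2 + a * w * v + (a^2/2 + k) * w^2)
     + (2 * v * (- a * v - k * w + r) + a * (v * v + w * (- a * v - k * w + r)) + (a^2 + 2 * k) * w * v) \<le> 0"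
proof -
  define K where "K = 1 + a + a^2/2 + k"
  define \<kappa> where "\<kappa> = min (a/2) (a*k/2)"
  have K: "K > 0" unfolding K_def using a k by (simp add: add_pos_nonneg)
  have ka: "\<kappa> \<le> a/2" "\<kappa> \<le> a*k/2" "\<kappa> > 0" unfolding \<kappa>_def using a k by auto
  have id: "2 * v * (- a * v - k * w + r) + a * (v * v + w * (- a * v - k * w + r)) + (a^2 + 2 * k) * w * v
      = - a * v^2 - a * k * w^2 + (2 * v + a * w) * r" by (simp add: algebra_simps power2_eq_square)
  have "(2 * v + a * w) * r \<le> \<bar>2 * v + a * w\<bar> * \<bar>r\<bar>" by (metis abs_ge_self abs_mult)
  also have "\<dots> \<le> (2 * \<bar>v\<bar> + a * \<bar>w\<bar>) * (e * \<bar>w\<bar>)"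
    using r a by (intro mult_mono) (auto simp: abs_mult intro: order_trans[OF abs_triangle_ineq])
  also have "\<dots> = e * (2 * \<bar>v\<bar> * \<bar>w\<bar> + a * w^2)" by (simp add: algebra_simps power2_eq_square)
  also have "\<dots> \<le> e * (v^2 + w^2 + a * w^2)"
  proof -
    have "2 * \<bar>v\<bar> * \<bar>w\<bar> \<le> v^2 + w^2"
      using sum_squares_bound[of "\<bar>v\<bar>" "\<bar>w\<bar>"] by simp
    thus ?thesis using e0 by (intro mult_left_mono) auto
  qed
  finally have rr: "(2 * v + a * w) * r \<le> e * v^2 + e * (1 + a) * w^2" by (simp add: algebra_simps)
  have ev: "e * v^2 \<le> (a/2) * v^2" using e1 by (intro mult_right_mono) auto
  have ew: "e * (1 + a) * w^2 \<le> (a * k / 2) * w^2" using e2 by (intro mult_right_mono) auto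
  have E': "- a * v^2 - a * k * w^2 + (2 * v + a * w) * r \<le> - (a/2) * v^2 - (a*k/2) * w^2"
    using rr ev ew by (simp add: algebra_simps)
  have avw: "a * w * v \<le> a * (v^2 + w^2)"
  proof -
    have "2 * w * v \<le> w^2 + v^2" by (rule sum_squares_bound)
    moreover have "0 \<le> v^2" "0 \<le> w^2" by simp_all
    ultimately have "w * v \<le> v^2 + w^2" by linarith
    thus ?thesis using a by (simp add: mult_left_mono mult.assoc)
  qed
  have EK: "v^2 + a * w * v + (a^2/2 + k) * w^2 \<le> K * (v^2 + w^2)"
  proof -
    have "K * (v^2 + w^2) = (v^2 + a * (v^2 + w^2) + (a^2 / 2 + k) * w^2) + ((a^2 / 2 + k) * v^2 + w^2)"
      unfolding K_def by (simp add: algebra_simps)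
    moreover have "0 \<le> (a^2 / 2 + k) * v^2" "0 \<le> w^2" using k by simp_all
    ultimately show ?thesis using avw by linarith
  qed
  have Enn: "0 \<le> K * (v^2 + w^2)" using K by simp
  have "(\<kappa> / K) * (v^2 + a * w * v + (a^2/2 + k) * w^2) \<le> (\<kappa> / K) * (K * (v^2 + w^2))"
    using EK K ka by (intro mult_left_mono) auto
  also have "\<dots> = \<kappa> * v^2 + \<kappa> * w^2" using K by (simp add: algebra_simps)
  also have "\<dots> \<le> (a/2) * v^2 + (a*k/2) * w^2"
    using ka by (intro add_mono mult_right_mono) auto
  finally have "(\<kappa> / K) * (v^2 + a * w * v + (a^2/2 + k) * w^2) \<le> (a/2) * v^2 + (a*k/2) * w^2" .
  thus ?thesis using E' unfolding id \<kappa>_def[symmetric] K_def[symmetric] by linarith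
qed

lemma uniq:
  assumes N: "N \<ge> 3" and p: "p > pS N"
    and sol1: "is_sol N p T1 y1 y1'" and sol2: "is_sol N p T2 y2 y2'"
  shows "\<exists>T'. \<forall>t\<le>T'. y1 t = y2 t"
proof -
  define a where "a = alpha N p"
  define k where "k = p - 1"
  have a0: "a > 0" using consts_pos[OF N p] unfolding a_def by simp
  have p1: "p > 1" using consts_pos[OF N p] by simp
  have k0: "k > 0" using p1 unfolding k_def by simp
  define e where "e = min (a/2) (a * k / (2 * (1 + a)))"
  have e0: "e > 0" unfolding e_def using a0 k0 by auto
  have e1: "e \<le> a/2" unfolding e_def by (rule min.cobounded1)
  have e2: "e * (1 + a) \<le> a * k / 2"
  proof -
    have "e * (1 + a) \<le> (a * k / (2 * (1 + a))) * (1 + a)" unfolding e_def using a0 by (intro mult_right_mono) auto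
    also have "(a * k / (2 * (1 + a))) * (1 + a) = a * k / 2" using a0 by (simp add: field_simps)
    finally show ?thesis .
  qed
  obtain d T3 where d: "d > 0" "d \<le> 1/2" and T3: "\<And>t a b. t \<le> T3 \<Longrightarrow> \<bar>a - 1\<bar> \<le> d \<Longrightarrow> \<bar>b - 1\<bar> \<le> d \<Longrightarrow>
     \<bar>p * (a - b) - (1 + B0 N p t) * (a powr p - b powr p) - B1 N p t * (a - b)\<bar> \<le> e * \<bar>a - b\<bar>"
    using key_lip[OF p1 e0 lim_B[OF N p]] by metis
  have lim1: "(y1 \<longlongrightarrow> 1) at_bot" using sol1 unfolding is_sol_def by simp
  have lim2: "(y2 \<longlongrightarrow> 1) at_bot" using sol2 unfolding is_sol_def by simp
  obtain R1 where R1: "\<And>t. t \<le> R1 \<Longrightarrow> \<bar>y1 t - 1\<bar> \<le> d" using lim_near1[OF lim1 d(1)] by auto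
  obtain R2 where R2: "\<And>t. t \<le> R2 \<Longrightarrow> \<bar>y2 t - 1\<bar> \<le> d" using lim_near1[OF lim2 d(1)] by auto
  obtain t11 M1 where t11: "t11 < T1" and M1: "\<And>t. t \<le> t11 \<Longrightarrow> \<bar>y1' t\<bar> \<le> M1"
    using sol_deriv_bounded[OF N p sol1] by auto
  obtain t12 M2 where t12: "t12 < T2" and M2: "\<And>t. t \<le> t12 \<Longrightarrow> \<bar>y2' t\<bar> \<le> M2"
    using sol_deriv_bounded[OF N p sol2] by auto
  define t0 where "t0 = min (min T3 (min R1 R2)) (min t11 t12)"
  have t0: "t0 \<le> T3" "t0 \<le> R1" "t0 \<le> R2" "t0 \<le> t11" "t0 \<le> t12" "t0 < T1" "t0 < T2"
    unfolding t0_def using t11 t12 by auto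
  define w where "w = (\<lambda>x. y1 x - y2 x)"
  define v where "v = (\<lambda>x. y1' x - y2' x)"
  define r where "r = (\<lambda>x. p * (y1 x - y2 x) - (1 + B0 N p x) * (y1 x powr p - y2 x powr p) - B1 N p x * (y1 x - y2 x))"
  define K where "K = 1 + a + a^2/2 + k"
  define \<rho> where "\<rho> = min (a/2) (a*k/2) / K"
  define E where "E = (\<lambda>x. (v x)^2 + a * w x * v x + (a^2/2 + k) * (w x)^2)"
  define Mv where "Mv = M1 + M2"
  have K0: "K > 0" unfolding K_def using a0 k0 by (simp add: add_pos_nonneg)
  have rho0: "\<rho> > 0" unfolding \<rho>_def using a0 k0 K0 by auto
  have dw: "(w has_real_derivative v x) (at x)" if "x \<le> t0" for x
    unfolding w_def v_def using is_solD(1)[OF sol1, of x] is_solD(1)[OF sol2, of x] that t0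
    by (auto intro!: derivative_eq_intros)
  have dv: "(v has_real_derivative (- a * v x - k * w x + r x)) (at x)" if "x \<le> t0" for x
  proof -
    have "(v has_real_derivative
       ((- alpha N p * y1' x + y1 x - y1 x powr p - B0 N p x * y1 x powr p - B1 N p x * y1 x) -
        (- alpha N p * y2' x + y2 x - y2 x powr p - B0 N p x * y2 x powr p - B1 N p x * y2 x))) (at x)"
      unfolding v_def using is_solD(2)[OF sol1, of x] is_solD(2)[OF sol2, of x] that t0
      by (auto intro!: derivative_eq_intros)
    moreover have "(- alpha N p * y1' x + y1 x - y1 x powr p - B0 N p x * y1 x powr p - B1 N p x * y1 x) -
        (- alpha N p * y2' x + y2 x - y2 x powr p - B0 N p x * y2 x powr p - B1 N p x * y2 x)
        = - a * v x - k * w x + r x"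
      unfolding a_def v_def w_def r_def k_def by (simp add: algebra_simps)
    ultimately show ?thesis by simp
  qed
  have rb: "\<bar>r x\<bar> \<le> e * \<bar>w x\<bar>" if "x \<le> t0" for x
    unfolding r_def w_def using T3[of x "y1 x" "y2 x"] R1[of x] R2[of x] that t0 by auto
  have wb: "\<bar>w x\<bar> \<le> 1" if "x \<le> t0" for x
    using R1[of x] R2[of x] that t0 d unfolding w_def by auto
  have vb: "\<bar>v x\<bar> \<le> Mv" if "x \<le> t0" for x
    using M1[of x] M2[of x] that t0 unfolding v_def Mv_def by auto
  have Ebound: "E x \<le> K * (Mv^2 + 1)" if "x \<le> t0" for x
  proof -
    have "a * w x * v x \<le> a * ((v x)^2 + (w x)^2)"
    proof -
      have "2 * w x * v x \<le> (w x)^2 + (v x)^2" by (rule sum_squares_bound)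
      moreover have "0 \<le> (v x)^2" "0 \<le> (w x)^2" by simp_all
      ultimately have "w x * v x \<le> (v x)^2 + (w x)^2" by linarith
      thus ?thesis using a0 by (simp add: mult_left_mono mult.assoc)
    qed
    hence "E x \<le> K * ((v x)^2 + (w x)^2)"
    proof -
      assume avw: "a * w x * v x \<le> a * ((v x)^2 + (w x)^2)"
      have "K * ((v x)^2 + (w x)^2) = ((v x)^2 + a * ((v x)^2 + (w x)^2) + (a^2 / 2 + k) * (w x)^2) + ((a^2 / 2 + k) * (v x)^2 + (w x)^2)"
        unfolding K_def by (simp add: algebra_simps)
      moreover have "0 \<le> (a^2 / 2 + k) * (v x)^2" "0 \<le> (w x)^2" using k0 by simp_all
      ultimately show ?thesis using avw unfolding E_def by linarith
    qed
    also have "\<dots> \<le> K * (Mv^2 + 1)"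
    proof -
      have "(v x)^2 \<le> Mv^2" using vb[OF that] by (metis abs_le_square_iff abs_of_nonneg abs_ge_zero order_trans power2_abs abs_le_iff power_mono)
      moreover have "(w x)^2 \<le> 1" using wb[OF that] by (simp add: abs_square_le_1)
      ultimately show ?thesis using K0 by (intro mult_left_mono) auto
    qed
    finally show ?thesis .
  qed
  have Elow: "E x \<ge> k * (w x)^2" for x
  proof -
    have "E x = (v x + a * w x / 2)^2 + (a^2/4 + k) * (w x)^2" unfolding E_def by (simp add: algebra_simps power2_eq_square)
    moreover have "0 \<le> (v x + a * w x / 2)^2" "0 \<le> (a^2/4) * (w x)^2" by simp_all
    ultimately show ?thesis by (simp add: algebra_simps)
  qed
  have mono: "exp (\<rho> * t) * E t \<le> exp (\<rho> * s) * E s" if st: "s \<le> t" "t \<le> t0" for s t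
  proof -
    have "(\<lambda>x. exp (\<rho> * x) * E x) t \<le> (\<lambda>x. exp (\<rho> * x) * E x) s"
    proof (rule DERIV_nonpos_imp_nonincreasing[OF st(1)])
      fix x assume x: "s \<le> x" "x \<le> t"
      hence xt: "x \<le> t0" using st by simp
      have "((\<lambda>x. exp (\<rho> * x) * E x) has_real_derivative
         (\<rho> * exp (\<rho> * x) * E x + exp (\<rho> * x) *
           (2 * v x * (- a * v x - k * w x + r x) + a * (v x * v x + w x * (- a * v x - k * w x + r x))
             + (a^2 + 2 * k) * w x * v x))) (at x)"
        unfolding E_def
        by (rule derivative_eq_intros dw[OF xt] dv[OF xt] refl | simp)+ (simp add: algebra_simps power2_eq_square)
      moreover have "\<rho> * exp (\<rho> * x) * E x + exp (\<rho> * x) *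
           (2 * v x * (- a * v x - k * w x + r x) + a * (v x * v x + w x * (- a * v x - k * w x + r x))
             + (a^2 + 2 * k) * w x * v x) \<le> 0"
      proof -
        have "\<rho> * E x + (2 * v x * (- a * v x - k * w x + r x) + a * (v x * v x + w x * (- a * v x - k * w x + r x))
             + (a^2 + 2 * k) * w x * v x) \<le> 0"
          using lyap_ineq[OF a0 k0 _ e1 e2 rb[OF xt], of "v x"] e0 unfolding \<rho>_def K_def E_def by simp
        hence "exp (\<rho> * x) * (\<rho> * E x + (2 * v x * (- a * v x - k * w x + r x) + a * (v x * v x + w x * (- a * v x - k * w x + r x))
             + (a^2 + 2 * k) * w x * v x)) \<le> 0" by (simp add: mult_nonneg_nonpos)
        thus ?thesis by (simp add: algebra_simps)
      qed
      ultimately show "\<exists>D. ((\<lambda>x. exp (\<rho> * x) * E x) has_real_derivative D) (at x) \<and> D \<le> 0" by blast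
    qed
    thus ?thesis by simp
  qed
  define B where "B = K * (Mv^2 + 1)"
  have B0: "B > 0" unfolding B_def using K0 by (smt (verit) mult_pos_pos zero_le_power2)
  show ?thesis
  proof (rule exI[of _ t0], intro allI impI)
    fix t assume t: "t \<le> t0"
    show "y1 t = y2 t"
    proof (rule ccontr)
      assume "y1 t \<noteq> y2 t"
      hence "w t \<noteq> 0" unfolding w_def by simp
      hence Ept: "E t > 0" using Elow[of t] k0 by (smt (verit) mult_pos_pos zero_less_power2)
      have EB: "E t \<le> B" using Ebound[OF t] unfolding B_def .
      define s where "s = t + ln (E t / (2 * B)) / \<rho>"
      have "ln (E t / (2 * B)) < 0" using Ept EB B0 by (simp add: ln_less_zero_iff field_simps)
      hence st: "s \<le> t" unfolding s_def using rho0 by (simp add: divide_neg_pos less_imp_le)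
      have es: "exp (\<rho> * s) = exp (\<rho> * t) * (E t / (2 * B))"
        unfolding s_def using rho0 Ept B0 by (simp add: distrib_left exp_add)
      have "exp (\<rho> * t) * E t \<le> exp (\<rho> * s) * E s" by (rule mono[OF st t])
      also have "\<dots> \<le> exp (\<rho> * s) * B" using Ebound[of s] st t unfolding B_def by (intro mult_left_mono) auto
      also have "\<dots> = exp (\<rho> * t) * E t / 2" unfolding es using B0 by simp
      finally show False using Ept by simp
    qed
  qed
qed

lemma exp_int_atMost:
  fixes c t :: real
  assumes c: "c > 0"
  shows "(\<lambda>s. exp (c * s)) absolutely_integrable_on {..t} \<and> integral {..t} (\<lambda>s. exp (c * s)) = exp (c * t) / c"
proof -
  have h: "((\<lambda>x. exp (- c * x)) has_integral exp (- c * (- t)) / c) {-t..}"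
    using has_integral_exp_minus_to_infinity[OF c, of "-t"] .
  have ai: "(\<lambda>x. exp (- c * x)) absolutely_integrable_on {-t..}"
    using h by (intro nonnegative_absolutely_integrable_1) (auto simp: integrable_on_def)
  have "(\<lambda>x. exp (c * (- x))) absolutely_integrable_on {-t..} \<and> integral {-t..} (\<lambda>x. exp (c * (- x))) = exp (c * t) / c"
    using ai h integral_unique[OF h] by simp
  thus ?thesis
    using has_absolute_integral_reflect_real[of "{-t..}" "{..t}" "\<lambda>x. exp (c * x)" "exp (c * t) / c"]
    by auto
qed

definition Sop :: "complex \<Rightarrow> (real \<Rightarrow> complex) \<Rightarrow> real \<Rightarrow> complex" where
  "Sop l h t = exp (l * of_real t) * integral {..t} (\<lambda>s. exp (- (l * of_real s)) * h s)"

lemma norm_exp_l: "norm (exp (- (l * complex_of_real s))) = exp ((- Re l) * s)"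
  by (simp add: norm_exp_eq_Re)

lemma Sop_int:
  assumes l: "Re l < 0" and hc: "continuous_on UNIV h" and hb: "\<And>s. norm (h s) \<le> H"
  shows "(\<lambda>s. exp (- (l * of_real s)) * h s) integrable_on {..t}"
proof (rule measurable_bounded_by_integrable_imp_integrable)
  define c where "c = - Re l"
  have c: "c > 0" using l unfolding c_def by simp
  show "(\<lambda>s. exp (- (l * of_real s)) * h s) \<in> borel_measurable (lebesgue_on {..t})"
    by (rule continuous_imp_measurable_on_sets_lebesgue) (auto intro!: continuous_intros continuous_on_subset[OF hc])
  show "(\<lambda>s. H * exp (c * s)) integrable_on {..t}"
  proof -
    have "(\<lambda>s. exp (c * s)) integrable_on {..t}" using exp_int_atMost[OF c, of t] absolutely_integrable_on_def by blast
    from integrable_on_cmult_left[OF this, of "H"] show ?thesis by simp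
  qed
  show "norm (exp (- (l * of_real s)) * h s) \<le> H * exp (c * s)" if "s \<in> {..t}" for s
    unfolding norm_mult norm_exp_l c_def using hb[of s] by (simp add: mult.commute mult_right_mono)
  show "{..t} \<in> sets lebesgue" by simp
qed

lemma Sop_bound:
  assumes l: "Re l < 0" and hc: "continuous_on UNIV h" and hb: "\<And>s. norm (h s) \<le> H"
    and hb': "\<And>s. s \<le> t \<Longrightarrow> norm (h s) \<le> H'"
  shows "norm (Sop l h t) \<le> H' / (- Re l)"
proof -
  define c where "c = - Re l"
  have c: "c > 0" using l unfolding c_def by simp
  have ei: "(\<lambda>s. H' * exp (c * s)) integrable_on {..t}"
  proof -
    have "(\<lambda>s. exp (c * s)) integrable_on {..t}" using exp_int_atMost[OF c, of t] absolutely_integrable_on_def by blast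
    from integrable_on_cmult_left[OF this, of "H'"] show ?thesis by simp
  qed
  have "norm (integral {..t} (\<lambda>s. exp (- (l * of_real s)) * h s)) \<le> integral {..t} (\<lambda>s. H' * exp (c * s))"
  proof (rule integral_norm_bound_integral[OF Sop_int[OF l hc hb] ei])
    fix s assume "s \<in> {..t}"
    thus "norm (exp (- (l * of_real s)) * h s) \<le> H' * exp (c * s)"
      unfolding norm_mult norm_exp_l c_def using hb'[of s] by (simp add: mult.commute mult_right_mono)
  qed
  also have "\<dots> = H' * (exp (c * t) / c)" using exp_int_atMost[OF c, of t] by simp
  finally have I: "norm (integral {..t} (\<lambda>s. exp (- (l * of_real s)) * h s)) \<le> H' * (exp (c * t) / c)" .
  have "norm (Sop l h t) = exp (- c * t) * norm (integral {..t} (\<lambda>s. exp (- (l * of_real s)) * h s))"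
    unfolding Sop_def norm_mult c_def by (simp add: norm_exp_eq_Re)
  also have "\<dots> \<le> exp (- c * t) * (H' * (exp (c * t) / c))" using I by (intro mult_left_mono) auto
  also have "\<dots> = H' / c" using c by (simp add: exp_minus field_simps)
  finally show ?thesis unfolding c_def .
qed

lemma Sop_deriv:
  assumes l: "Re l < 0" and hc: "continuous_on UNIV h" and hb: "\<And>s. norm (h s) \<le> H"
  shows "(Sop l h has_vector_derivative (l * Sop l h t + h t)) (at t)"
proof -
  define f where "f = (\<lambda>s. exp (- (l * of_real s)) * h s)"
  define I where "I = (\<lambda>x. integral {..x} f)"
  have fc: "continuous_on UNIV f" unfolding f_def by (intro continuous_intros hc)
  have fi: "f integrable_on {..x}" for x unfolding f_def by (rule Sop_int[OF l hc hb])
  define a where "a = t - 1"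
  define b where "b = t + 1"
  have J: "I x = I a + integral {a..x} f" if "a \<le> x" for x
  proof -
    have "{..x} = {..a} \<union> {a..x}" using that by auto
    moreover have "{..a} \<inter> {a..x} = {a}" using that by auto
    hence "negligible ({..a} \<inter> {a..x})" by simp
    have "integral ({..a} \<union> {a..x}) f = integral {..a} f + integral {a..x} f"
      by (rule integral_Un[OF fi[of a] integrable_on_subinterval[OF fi[of x]] \<open>negligible ({..a} \<inter> {a..x})\<close>]) auto
    thus ?thesis unfolding I_def using \<open>{..x} = {..a} \<union> {a..x}\<close> by simp
  qed
  have "((\<lambda>x. integral {a..x} f) has_vector_derivative f t) (at t within {a..b})"
    using fc by (intro integral_has_vector_derivative) (auto simp: a_def b_def intro: continuous_on_subset)
  hence "((\<lambda>x. integral {a..x} f) has_vector_derivative f t) (at t within {a<..<b})"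
    by (rule has_vector_derivative_within_subset) auto
  hence "((\<lambda>x. integral {a..x} f) has_vector_derivative f t) (at t)"
    by (subst (asm) has_vector_derivative_within_open) (auto simp: a_def b_def)
  hence "((\<lambda>x. I a + integral {a..x} f) has_vector_derivative f t) (at t)"
    by (auto intro!: derivative_eq_intros)
  hence dI: "(I has_vector_derivative f t) (at t)"
  proof (rule has_vector_derivative_transform_within_open[of _ _ _ "{a<..<b}"])
    fix y assume "y \<in> {a<..<b}"
    thus "I a + integral {a..y} f = I y" using J[of y] by simp
  qed (auto simp: a_def b_def)
  have dE: "((\<lambda>x. exp (l * of_real x)) has_vector_derivative (l * exp (l * of_real t))) (at t)"
    by (rule has_vector_derivative_real_field) (auto intro!: derivative_eq_intros)
  have "((\<lambda>x. exp (l * of_real x) * I x) has_vector_derivative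
        (exp (l * of_real t) * f t + (l * exp (l * of_real t)) * I t)) (at t)"
    by (rule has_vector_derivative_mult[OF dE dI])
  moreover have "exp (l * of_real t) * f t + (l * exp (l * of_real t)) * I t = l * Sop l h t + h t"
  proof -
    have e1: "exp (l * of_real t) * exp (- (l * of_real t)) = 1" by (simp add: exp_minus_inverse)
    have "exp (l * of_real t) * f t = h t" unfolding f_def using e1 by (simp add: mult.assoc[symmetric])
    moreover have "(l * exp (l * of_real t)) * I t = l * Sop l h t" unfolding Sop_def I_def f_def by (simp add: mult.assoc)
    ultimately show ?thesis by (simp add: add.commute)
  qed
  moreover have "(\<lambda>x. exp (l * of_real x) * I x) = Sop l h" unfolding I_def Sop_def f_def by auto
  ultimately show ?thesis by simp
qed

lemma Sop_cont:
  assumes l: "Re l < 0" and hc: "continuous_on UNIV h" and hb: "\<And>s. norm (h s) \<le> H"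
  shows "continuous_on UNIV (Sop l h)"
  using Sop_deriv[OF assms] by (intro continuous_at_imp_continuous_on) (auto intro: has_vector_derivative_continuous)

lemma Sop_diff:
  assumes l: "Re l < 0" and hc: "continuous_on UNIV h1" and hb: "\<And>s. norm (h1 s) \<le> H1"
    and hc2: "continuous_on UNIV h2" and hb2: "\<And>s. norm (h2 s) \<le> H2"
  shows "Sop l h1 t - Sop l h2 t = Sop l (\<lambda>s. h1 s - h2 s) t"
proof -
  have "integral {..t} (\<lambda>s. exp (- (l * of_real s)) * (h1 s - h2 s)) =
        integral {..t} (\<lambda>s. exp (- (l * of_real s)) * h1 s - exp (- (l * of_real s)) * h2 s)"
    by (simp add: algebra_simps)
  also have "\<dots> = integral {..t} (\<lambda>s. exp (- (l * of_real s)) * h1 s) - integral {..t} (\<lambda>s. exp (- (l * of_real s)) * h2 s)"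
    by (rule integral_diff[OF Sop_int[OF l hc hb] Sop_int[OF l hc2 hb2]])
  finally have eq: "integral {..t} (\<lambda>s. exp (- (l * of_real s)) * (h1 s - h2 s)) =
     integral {..t} (\<lambda>s. exp (- (l * of_real s)) * h1 s) - integral {..t} (\<lambda>s. exp (- (l * of_real s)) * h2 s)" .
  show ?thesis unfolding Sop_def eq by (simp only: right_diff_distrib)
qed

lemma roots:
  fixes a k :: real
  assumes a: "a > 0" and k: "k > 0"
  shows "\<exists>l1 l2 :: complex. l1 + l2 = - of_real a \<and> l1 * l2 = of_real k \<and> Re l1 < 0 \<and> Re l2 < 0"
proof (cases "a^2 - 4 * k \<ge> 0")
  case True
  define D where "D = a^2 - 4 * k"
  have D0: "D \<ge> 0" using True unfolding D_def .
  have sD: "sqrt D < a"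
  proof -
    have "D < a^2" unfolding D_def using k by simp
    hence "sqrt D < sqrt (a^2)" by (rule real_sqrt_less_mono)
    thus ?thesis using a by simp
  qed
  have sq: "sqrt D * sqrt D = D" using D0 by simp
  show ?thesis
  proof (intro exI conjI)
    have "((- a + sqrt D) / 2) + ((- a - sqrt D) / 2) = - a" by (simp add: field_simps)
    thus "complex_of_real ((- a + sqrt D) / 2) + complex_of_real ((- a - sqrt D) / 2) = - of_real a"
      by (metis of_real_add of_real_minus)
    have "((- a + sqrt D) / 2) * ((- a - sqrt D) / 2) = k"
      using sq unfolding D_def by (simp add: algebra_simps power2_eq_square)
    thus "complex_of_real ((- a + sqrt D) / 2) * complex_of_real ((- a - sqrt D) / 2) = of_real k"
      by (metis of_real_mult)
    show "Re (complex_of_real ((- a + sqrt D) / 2)) < 0" using sD by simp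
    show "Re (complex_of_real ((- a - sqrt D) / 2)) < 0" using a D0 by simp (smt (verit) real_sqrt_ge_zero)
  qed
next
  case False
  define D where "D = 4 * k - a^2"
  have D0: "D > 0" using False unfolding D_def by simp
  have sq: "sqrt D * sqrt D = D" using D0 by simp
  show ?thesis
  proof (intro exI conjI)
    show "Complex (- a / 2) (sqrt D / 2) + Complex (- a / 2) (- sqrt D / 2) = - of_real a"
      by (simp add: complex_eq_iff)
    show "Complex (- a / 2) (sqrt D / 2) * Complex (- a / 2) (- sqrt D / 2) = of_real k"
      using sq unfolding D_def by (simp add: complex_eq_iff algebra_simps power2_eq_square) (simp add: field_simps)
  qed (use a in auto)
qed

definition clamp :: "real \<Rightarrow> real \<Rightarrow> real" where "clamp d z = max (- d) (min d z)"

lemma clamp_props: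
  assumes "d > 0"
  shows "\<bar>clamp d z\<bar> \<le> d" "\<bar>clamp d z1 - clamp d z2\<bar> \<le> \<bar>z1 - z2\<bar>" "\<bar>z\<bar> \<le> d \<Longrightarrow> clamp d z = z"
    "clamp d 0 = 0" "continuous_on UNIV (clamp d)"
  using assms unfolding clamp_def by (auto intro!: continuous_intros)

locale ex_setup =
  fixes N :: nat and p :: real and l1 l2 :: complex and d T :: real
  assumes N: "N \<ge> 3" and p: "p > pS N"
    and l12: "l1 + l2 = - of_real (alpha N p)" and l12m: "l1 * l2 = of_real (p - 1)"
    and rl1: "Re l1 < 0" and rl2: "Re l2 < 0"
    and d: "d > 0" "d \<le> 1/2"
    and lip: "\<And>t a b. t \<le> T \<Longrightarrow> \<bar>a - 1\<bar> \<le> d \<Longrightarrow> \<bar>b - 1\<bar> \<le> d \<Longrightarrow>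
       \<bar>p * (a - b) - (1 + B0 N p t) * (a powr p - b powr p) - B1 N p t * (a - b)\<bar> \<le> (Re l1 * Re l2 / 2) * \<bar>a - b\<bar>"
    and small: "\<And>t. t \<le> T \<Longrightarrow> \<bar>B0 N p t + B1 N p t\<bar> \<le> d * (Re l1 * Re l2) / 2"
begin

definition cc where "cc = Re l1 * Re l2"

lemma cc_pos: "cc > 0" unfolding cc_def using rl1 rl2 by (simp add: mult_neg_neg)

definition Gf :: "real \<Rightarrow> real \<Rightarrow> real" where
  "Gf s z = (1 + clamp d z) - (1 + B0 N p (min s T)) * (1 + clamp d z) powr p
      - B1 N p (min s T) * (1 + clamp d z) + (p - 1) * clamp d z"

lemma G_lip: "\<bar>Gf s z1 - Gf s z2\<bar> \<le> (cc / 2) * \<bar>clamp d z1 - clamp d z2\<bar>"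
proof -
  define u1 where "u1 = clamp d z1"
  define u2 where "u2 = clamp d z2"
  define r where "r = min s T"
  have r: "r \<le> T" unfolding r_def by simp
  have u: "\<bar>(1 + u1) - 1\<bar> \<le> d" "\<bar>(1 + u2) - 1\<bar> \<le> d" unfolding u1_def u2_def using clamp_props(1)[OF d(1)] by auto
  have "Gf s z1 - Gf s z2 = p * ((1 + u1) - (1 + u2)) - (1 + B0 N p r) * ((1 + u1) powr p - (1 + u2) powr p)
      - B1 N p r * ((1 + u1) - (1 + u2))"
    unfolding Gf_def u1_def[symmetric] u2_def[symmetric] r_def[symmetric] by (simp add: algebra_simps)
  hence "\<bar>Gf s z1 - Gf s z2\<bar> \<le> (Re l1 * Re l2 / 2) * \<bar>(1 + u1) - (1 + u2)\<bar>"
    using lip[OF r u] by simp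
  thus ?thesis unfolding cc_def u1_def u2_def by simp
qed

lemma G_zero: "Gf s 0 = - (B0 N p (min s T) + B1 N p (min s T))"
  unfolding Gf_def using clamp_props(4)[OF d(1)] by simp

lemma G_bound0: "\<bar>Gf s 0\<bar> \<le> d * cc / 2"
proof -
  have "\<bar>Gf s 0\<bar> = \<bar>B0 N p (min s T) + B1 N p (min s T)\<bar>" unfolding G_zero by (rule abs_minus_cancel)
  thus ?thesis unfolding cc_def using small[of "min s T"] by simp
qed

lemma G_bound: "\<bar>Gf s z\<bar> \<le> d * cc"
proof -
  have "\<bar>Gf s z\<bar> \<le> \<bar>Gf s 0\<bar> + \<bar>Gf s z - Gf s 0\<bar>" by linarith
  also have "\<dots> \<le> d * cc / 2 + (cc / 2) * \<bar>clamp d z - clamp d 0\<bar>"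
    using G_bound0 G_lip by (rule add_mono)
  also have "\<dots> \<le> d * cc / 2 + (cc / 2) * d"
    using clamp_props(1)[OF d(1), of z] clamp_props(4)[OF d(1)] cc_pos by (intro add_mono mult_left_mono) auto
  finally show ?thesis by simp
qed

lemma B_cont: "continuous_on UNIV (B0 N p)" "continuous_on UNIV (B1 N p)"
proof -
  have "continuous_on UNIV (\<lambda>t. (1 + exp (2 * mconst N p * t)) powr qconst N p - 1)"
  proof (intro continuous_on_diff continuous_on_powr continuous_on_const continuous_on_add continuous_on_exp continuous_on_mult ballI continuous_on_id)
    fix x :: real show "1 + exp (2 * mconst N p * x) \<noteq> 0" by (smt (verit) exp_gt_zero)
  qed
  thus "continuous_on UNIV (B0 N p)" unfolding B0_def[abs_def] .
  have "continuous_on UNIV (\<lambda>t. real N * (real N - 2) * exp (2 * mconst N p * t) / (1 + exp (2 * mconst N p * t))\<^sup>2)"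
  proof (intro continuous_on_divide continuous_on_power continuous_on_const continuous_on_add continuous_on_exp continuous_on_mult ballI continuous_on_id)
    fix x :: real show "(1 + exp (2 * mconst N p * x))\<^sup>2 \<noteq> 0" by (smt (verit) exp_gt_zero zero_less_power2)
  qed
  thus "continuous_on UNIV (B1 N p)" unfolding B1_def[abs_def] .
qed

lemma G_cont:
  assumes "continuous_on UNIV f"
  shows "continuous_on UNIV (\<lambda>s. Gf s (f s))"
proof -
  have cl: "continuous_on UNIV (\<lambda>s. clamp d (f s))"
    using continuous_on_compose[OF assms continuous_on_subset[OF clamp_props(5)[OF d(1)]]] by (simp add: o_def)
  have pos: "1 + clamp d (f s) \<noteq> 0" for s using clamp_props(1)[OF d(1), of "f s"] d by auto
  have m: "continuous_on UNIV (\<lambda>s::real. min s T)" by (intro continuous_intros)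
  have b0: "continuous_on UNIV (\<lambda>s. B0 N p (min s T))"
    using continuous_on_compose[OF m continuous_on_subset[OF B_cont(1)]] by (simp add: o_def)
  have b1: "continuous_on UNIV (\<lambda>s. B1 N p (min s T))"
    using continuous_on_compose[OF m continuous_on_subset[OF B_cont(2)]] by (simp add: o_def)
  show ?thesis unfolding Gf_def
    by (intro continuous_on_add continuous_on_diff continuous_on_mult continuous_on_powr continuous_on_const cl b0 b1 ballI pos)
qed

end

context ex_setup begin

lemma cc_eq: "cc = (- Re l1) * (- Re l2)" unfolding cc_def by simp

definition gf :: "(real \<Rightarrow>\<^sub>C real) \<Rightarrow> real \<Rightarrow> complex" where
  "gf f s = complex_of_real (Gf s (apply_bcontfun f s))"

lemma gf_cont: "continuous_on UNIV (gf f)"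
proof -
  have "continuous_on UNIV (\<lambda>s. Gf s (apply_bcontfun f s))" by (rule G_cont) simp
  thus ?thesis unfolding gf_def by (intro continuous_intros)
qed

lemma gf_bound: "norm (gf f s) \<le> d * cc"
  unfolding gf_def using G_bound by simp

definition Vf where "Vf f = Sop l1 (gf f)"
definition Wf where "Wf f = Sop l2 (Vf f)"

lemma Vf_bound: "norm (Vf f t) \<le> d * cc / (- Re l1)"
  unfolding Vf_def by (rule Sop_bound[OF rl1 gf_cont gf_bound gf_bound])

lemma Vf_cont: "continuous_on UNIV (Vf f)"
  unfolding Vf_def by (rule Sop_cont[OF rl1 gf_cont gf_bound])

lemma Wf_bound: "norm (Wf f t) \<le> d"
proof -
  have "norm (Wf f t) \<le> (d * cc / (- Re l1)) / (- Re l2)"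
    unfolding Wf_def by (rule Sop_bound[OF rl2 Vf_cont Vf_bound Vf_bound])
  also have "\<dots> = d" unfolding cc_eq using rl1 rl2 by simp
  finally show ?thesis .
qed

lemma Wf_cont: "continuous_on UNIV (Wf f)"
  unfolding Wf_def by (rule Sop_cont[OF rl2 Vf_cont Vf_bound])

lemma ReW_bcontfun: "(\<lambda>t. Re (Wf f t)) \<in> bcontfun"
proof (rule bcontfun_normI)
  show "continuous_on UNIV (\<lambda>t. Re (Wf f t))" using Wf_cont by (intro continuous_intros)
  show "norm (Re (Wf f t)) \<le> d" for t using Wf_bound[of f t] abs_Re_le_cmod[of "Wf f t"] by simp
qed

definition Phi :: "(real \<Rightarrow>\<^sub>C real) \<Rightarrow> (real \<Rightarrow>\<^sub>C real)" where
  "Phi f = Bcontfun (\<lambda>t. Re (Wf f t))"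

lemma Phi_apply: "apply_bcontfun (Phi f) t = Re (Wf f t)"
  unfolding Phi_def using Bcontfun_inverse[OF ReW_bcontfun] by simp

lemma Phi_contr: "dist (Phi f1) (Phi f2) \<le> (1/2) * dist f1 f2"
proof -
  define D where "D = dist f1 f2"
  have gd: "norm (gf f1 s - gf f2 s) \<le> (cc / 2) * D" for s
  proof -
    have "norm (gf f1 s - gf f2 s) = \<bar>Gf s (apply_bcontfun f1 s) - Gf s (apply_bcontfun f2 s)\<bar>"
      unfolding gf_def by (simp flip: of_real_diff)
    also have "\<dots> \<le> (cc / 2) * \<bar>clamp d (apply_bcontfun f1 s) - clamp d (apply_bcontfun f2 s)\<bar>" by (rule G_lip)
    also have "\<dots> \<le> (cc / 2) * \<bar>apply_bcontfun f1 s - apply_bcontfun f2 s\<bar>"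
      using cc_pos clamp_props(2)[OF d(1)] by (intro mult_left_mono) auto
    also have "\<dots> \<le> (cc / 2) * D"
      using cc_pos dist_bounded[of f1 s f2] unfolding D_def dist_real_def by (intro mult_left_mono) auto
    finally show ?thesis .
  qed
  have gdc: "continuous_on UNIV (\<lambda>s. gf f1 s - gf f2 s)" by (intro continuous_on_diff gf_cont)
  have gdb: "norm (gf f1 s - gf f2 s) \<le> 2 * (d * cc)" for s
    using norm_triangle_ineq4[of "gf f1 s" "gf f2 s"] gf_bound[of f1 s] gf_bound[of f2 s] by simp
  have vd: "norm (Vf f1 t - Vf f2 t) \<le> (cc / 2) * D / (- Re l1)" for t
  proof -
    have "Vf f1 t - Vf f2 t = Sop l1 (\<lambda>s. gf f1 s - gf f2 s) t"
      unfolding Vf_def by (rule Sop_diff[OF rl1 gf_cont gf_bound gf_cont gf_bound])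
    also have "norm \<dots> \<le> (cc / 2) * D / (- Re l1)" by (rule Sop_bound[OF rl1 gdc gdb gd])
    finally show ?thesis .
  qed
  have vdc: "continuous_on UNIV (\<lambda>s. Vf f1 s - Vf f2 s)" by (intro continuous_on_diff Vf_cont)
  have vdb: "norm (Vf f1 s - Vf f2 s) \<le> d * cc / (- Re l1) + d * cc / (- Re l1)" for s
    using norm_triangle_ineq4[of "Vf f1 s" "Vf f2 s"] Vf_bound[of f1 s] Vf_bound[of f2 s] by linarith
  have wd: "norm (Wf f1 t - Wf f2 t) \<le> (1/2) * D" for t
  proof -
    have "Wf f1 t - Wf f2 t = Sop l2 (\<lambda>s. Vf f1 s - Vf f2 s) t"
      unfolding Wf_def by (rule Sop_diff[OF rl2 Vf_cont Vf_bound Vf_cont Vf_bound])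
    also have "norm \<dots> \<le> ((cc / 2) * D / (- Re l1)) / (- Re l2)" by (rule Sop_bound[OF rl2 vdc vdb vd])
    also have "\<dots> = (1/2) * D" unfolding cc_eq using rl1 rl2 by simp
    finally show ?thesis .
  qed
  show ?thesis unfolding D_def[symmetric]
  proof (rule dist_bound)
    fix t
    have "dist (apply_bcontfun (Phi f1) t) (apply_bcontfun (Phi f2) t) = \<bar>Re (Wf f1 t - Wf f2 t)\<bar>"
      unfolding Phi_apply dist_real_def by simp
    also have "\<dots> \<le> norm (Wf f1 t - Wf f2 t)" by (rule abs_Re_le_cmod)
    also have "\<dots> \<le> (1/2) * D" by (rule wd)
    finally show "dist (apply_bcontfun (Phi f1) t) (apply_bcontfun (Phi f2) t) \<le> (1/2) * D" .
  qed
qed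

lemma fixpoint: "\<exists>z. Phi z = z"
  using banach_fix_type[of "1/2" Phi] Phi_contr by auto

end

context ex_setup begin

lemma Gf_loc: "s \<le> T \<Longrightarrow> \<bar>z\<bar> \<le> d \<Longrightarrow>
  Gf s z = (1 + z) - (1 + B0 N p s) * (1 + z) powr p - B1 N p s * (1 + z) + (p - 1) * z"
  unfolding Gf_def using clamp_props(3)[OF d(1)] by (simp add: min_absorb1)

lemma exists_sol: "\<exists>y y'. is_sol N p T y y'"
proof -
  obtain z where zf: "Phi z = z" using fixpoint by blast
  define W where "W = Wf z"
  define V where "V = Vf z"
  define g where "g = gf z"
  define a where "a = alpha N p"
  have zW: "apply_bcontfun z t = Re (W t)" for t using Phi_apply[of z t] zf unfolding W_def by simp
  have zb: "\<bar>apply_bcontfun z t\<bar> \<le> d" for t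
    unfolding zW W_def using Wf_bound[of z t] abs_Re_le_cmod[of "Wf z t"] by simp
  have dV: "(V has_vector_derivative (l1 * V t + g t)) (at t)" for t
    unfolding V_def Vf_def g_def by (rule Sop_deriv[OF rl1 gf_cont gf_bound])
  have dW: "(W has_vector_derivative (l2 * W t + V t)) (at t)" for t
    unfolding W_def Wf_def V_def by (rule Sop_deriv[OF rl2 Vf_cont Vf_bound])
  define y where "y = (\<lambda>t. 1 + apply_bcontfun z t)"
  define y' where "y' = (\<lambda>t. Re (l2 * W t + V t))"
  have yW: "y = (\<lambda>t. 1 + Re (W t))" unfolding y_def using zW by auto
  have dy: "(y has_real_derivative y' t) (at t)" for t
  proof -
    have "((\<lambda>t. Re (W t)) has_vector_derivative Re (l2 * W t + V t)) (at t)"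
      by (rule bounded_linear.has_vector_derivative[OF bounded_linear_Re dW])
    hence "((\<lambda>t. Re (W t)) has_real_derivative Re (l2 * W t + V t)) (at t)"
      by (simp add: has_real_derivative_iff_has_vector_derivative)
    hence "((\<lambda>t. 1 + Re (W t)) has_real_derivative 0 + Re (l2 * W t + V t)) (at t)"
      by (rule DERIV_add[OF DERIV_const])
    thus ?thesis unfolding yW y'_def by (simp only: add_0_left)
  qed
  have dy': "(y' has_real_derivative Re (l2 * (l2 * W t + V t) + (l1 * V t + g t))) (at t)" for t
  proof -
    have "((\<lambda>t. l2 * W t + V t) has_vector_derivative (l2 * (l2 * W t + V t) + (l1 * V t + g t))) (at t)"
      by (intro has_vector_derivative_add has_vector_derivative_mult_right dW dV)
    hence "((\<lambda>t. Re (l2 * W t + V t)) has_vector_derivative Re (l2 * (l2 * W t + V t) + (l1 * V t + g t))) (at t)"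
      by (rule bounded_linear.has_vector_derivative[OF bounded_linear_Re])
    thus ?thesis unfolding y'_def by (simp add: has_real_derivative_iff_has_vector_derivative)
  qed
  have l22: "l2 * l2 = - of_real a * l2 - of_real (p - 1)"
  proof -
    have "l2 * l2 = l2 * (l1 + l2) - l1 * l2" by (simp add: algebra_simps)
    thus ?thesis unfolding l12 l12m a_def by (simp add: algebra_simps)
  qed
  have ode: "Re (l2 * (l2 * W t + V t) + (l1 * V t + g t)) =
      - alpha N p * y' t + y t - y t powr p - B0 N p t * y t powr p - B1 N p t * y t" if t: "t \<le> T" for t
  proof -
    have l1e: "l1 = - of_real a - l2" using l12 unfolding a_def by (simp add: algebra_simps)
    have "l2 * (l2 * W t + V t) + (l1 * V t + g t) = (l2 * l2) * W t + (l1 + l2) * V t + g t"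
      by (simp add: algebra_simps)
    also have "\<dots> = - of_real a * (l2 * W t + V t) - of_real (p - 1) * W t + g t"
      unfolding l22 l12 a_def by (simp add: algebra_simps)
    finally have eq: "l2 * (l2 * W t + V t) + (l1 * V t + g t) = - of_real a * (l2 * W t + V t) - of_real (p - 1) * W t + g t" .
    have reh: "Re (- complex_of_real a1 * Z - complex_of_real b1 * Y + G) = - a1 * Re Z - b1 * Re Y + Re G" for a1 b1 Z Y G
      by simp
    have "Re (l2 * (l2 * W t + V t) + (l1 * V t + g t)) = - a * y' t - (p - 1) * Re (W t) + Re (g t)"
      unfolding y'_def arg_cong[OF eq, of Re] reh ..
    also have "Re (g t) = Gf t (apply_bcontfun z t)" unfolding g_def gf_def by simp
    also have "\<dots> = (1 + Re (W t)) - (1 + B0 N p t) * (1 + Re (W t)) powr p - B1 N p t * (1 + Re (W t)) + (p - 1) * Re (W t)"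
      using Gf_loc[OF t zb[of t]] unfolding zW .
    finally show ?thesis unfolding yW a_def by (simp add: algebra_simps)
  qed
  have decay: "\<exists>R. \<forall>t\<le>R. \<bar>apply_bcontfun z t\<bar> \<le> \<eta>" if eta: "\<eta> > 0" for \<eta>
  proof -
    have lB: "((\<lambda>s. B0 N p s + B1 N p s) \<longlongrightarrow> 0) at_bot"
      using tendsto_add[OF lim_B(1)[OF N p] lim_B(2)[OF N p]] by simp
    obtain t1 where t1: "\<And>s. s \<le> t1 \<Longrightarrow> \<bar>B0 N p s + B1 N p s\<bar> \<le> \<eta> * cc / 2"
      using ev_bot[OF lB, of "\<eta> * cc / 2"] eta cc_pos by auto
    define t0 where "t0 = min t1 T"
    define M where "M = (SUP s\<in>{..t0}. \<bar>apply_bcontfun z s\<bar>)"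
    have bdd: "bdd_above ((\<lambda>s. \<bar>apply_bcontfun z s\<bar>) ` {..t0})" by (rule bdd_aboveI2[where M=d]) (rule zb)
    have Mup: "\<bar>apply_bcontfun z s\<bar> \<le> M" if "s \<le> t0" for s
      unfolding M_def using that bdd by (intro cSUP_upper) auto
    have loc: "\<bar>apply_bcontfun z r\<bar> \<le> \<eta> / 2 + M / 2" if r: "r \<le> t0" for r
    proof -
      have gb: "norm (g s) \<le> \<eta> * cc / 2 + (cc / 2) * M" if s: "s \<le> r" for s
      proof -
        have sT: "s \<le> T" "s \<le> t1" "s \<le> t0" using s r unfolding t0_def by auto
        have "norm (g s) = \<bar>Gf s (apply_bcontfun z s)\<bar>" unfolding g_def gf_def by simp
        also have "\<dots> \<le> \<bar>Gf s 0\<bar> + \<bar>Gf s (apply_bcontfun z s) - Gf s 0\<bar>" by linarith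
        also have "\<dots> \<le> \<eta> * cc / 2 + (cc / 2) * \<bar>clamp d (apply_bcontfun z s) - clamp d 0\<bar>"
        proof (rule add_mono)
          have "\<bar>Gf s 0\<bar> = \<bar>B0 N p s + B1 N p s\<bar>" unfolding G_zero using sT by (simp add: min_absorb1)
          thus "\<bar>Gf s 0\<bar> \<le> \<eta> * cc / 2" using t1[OF sT(2)] by simp
        qed (rule G_lip)
        also have "\<dots> \<le> \<eta> * cc / 2 + (cc / 2) * M"
          using clamp_props(3)[OF d(1) zb[of s]] clamp_props(4)[OF d(1)] Mup[OF sT(3)] cc_pos
          by (intro add_mono mult_left_mono) auto
        finally show ?thesis .
      qed
      have vb: "norm (V s) \<le> (\<eta> * cc / 2 + (cc / 2) * M) / (- Re l1)" if s: "s \<le> r" for s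
        unfolding V_def Vf_def using gb s
        by (intro Sop_bound[OF rl1 gf_cont gf_bound]) (auto simp: g_def)
      have "norm (W r) \<le> ((\<eta> * cc / 2 + (cc / 2) * M) / (- Re l1)) / (- Re l2)"
        unfolding W_def Wf_def using vb by (intro Sop_bound[OF rl2 Vf_cont Vf_bound]) (auto simp: V_def)
      also have "\<dots> = \<eta> / 2 + M / 2" unfolding cc_eq using rl1 rl2 by (simp add: field_simps)
      finally show ?thesis unfolding zW using abs_Re_le_cmod[of "W r"] by linarith
    qed
    have "M \<le> \<eta> / 2 + M / 2" unfolding M_def
      by (rule cSUP_least) (auto intro: loc simp: M_def[symmetric])
    hence "M \<le> \<eta>" by simp
    thus ?thesis using Mup by (intro exI[of _ t0]) force
  qed
  have lim: "(y \<longlongrightarrow> 1) at_bot"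
  proof (rule tendstoI)
    fix \<epsilon> :: real assume e: "\<epsilon> > 0"
    obtain R where R: "\<And>t. t \<le> R \<Longrightarrow> \<bar>apply_bcontfun z t\<bar> \<le> \<epsilon> / 2" using decay[of "\<epsilon>/2"] e by auto
    show "eventually (\<lambda>t. dist (y t) 1 < \<epsilon>) at_bot"
      unfolding eventually_at_bot_linorder using R e by (intro exI[of _ R]) (force simp: y_def dist_real_def)
  qed
  have "is_sol N p T y y'"
    unfolding is_sol_def
  proof (intro conjI allI impI lim)
    fix t assume t: "t \<le> T"
    show "(y has_real_derivative y' t) (at t within {..T})" using dy by (rule has_field_derivative_at_within)
    show "(y' has_real_derivative
            (- alpha N p * y' t + y t - y t powr p - B0 N p t * y t powr p - B1 N p t * y t)) (at t within {..T})"
      using dy'[of t] unfolding ode[OF t] by (rule has_field_derivative_at_within)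
  qed
  thus ?thesis by blast
qed

end

theorem lemma4p2:
  fixes N :: nat and p :: real
  assumes "N \<ge> 3" and "p > pS N"
  shows "(\<exists>T y y'. is_sol N p T y y') \<and>
         (\<forall>T1 T2 y1 y1' y2 y2'. is_sol N p T1 y1 y1' \<and> is_sol N p T2 y2 y2' \<longrightarrow>
            (\<exists>T'. \<forall>t\<le>T'. y1 t = y2 t))"
proof (intro conjI allI impI)
  note N = assms(1) and p = assms(2)
  have a0: "alpha N p > 0" and p1: "p > 1" using consts_pos[OF N p] by auto
  have k0: "p - 1 > 0" using p1 by simp
  obtain l1 l2 :: complex where l: "l1 + l2 = - of_real (alpha N p)" "l1 * l2 = of_real (p - 1)" "Re l1 < 0" "Re l2 < 0"
    using roots[OF a0 k0] by blast
  have L0: "Re l1 * Re l2 / 2 > 0" using l(3,4) by (simp add: mult_neg_neg)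
  obtain d T3 where d: "d > 0" "d \<le> 1/2" and T3: "\<And>t a b. t \<le> T3 \<Longrightarrow> \<bar>a - 1\<bar> \<le> d \<Longrightarrow> \<bar>b - 1\<bar> \<le> d \<Longrightarrow>
     \<bar>p * (a - b) - (1 + B0 N p t) * (a powr p - b powr p) - B1 N p t * (a - b)\<bar> \<le> (Re l1 * Re l2 / 2) * \<bar>a - b\<bar>"
    using key_lip[OF p1 L0 lim_B[OF N p]] by metis
  have lB: "((\<lambda>s. B0 N p s + B1 N p s) \<longlongrightarrow> 0) at_bot"
    using tendsto_add[OF lim_B(1)[OF N p] lim_B(2)[OF N p]] by simp
  obtain T4 where T4: "\<And>s. s \<le> T4 \<Longrightarrow> \<bar>B0 N p s + B1 N p s\<bar> \<le> d * (Re l1 * Re l2) / 2"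
    using ev_bot[OF lB, of "d * (Re l1 * Re l2) / 2"] d L0 by auto
  define T where "T = min T3 T4"
  interpret ex_setup N p l1 l2 d T
    by (unfold_locales) (use N p l d T3 T4 in \<open>auto simp: T_def\<close>)
  show "\<exists>T y y'. is_sol N p T y y'" using exists_sol by blast
next
  fix T1 T2 y1 y1' y2 y2'
  assume "is_sol N p T1 y1 y1' \<and> is_sol N p T2 y2 y2'"
  thus "\<exists>T'. \<forall>t\<le>T'. y1 t = y2 t" using uniq[OF assms] by blast
qed

end
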